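(* Let $a,a^{+}$ be boson operators with $aa^{+}-a^{+}a=1$, let $m\in\mathbb{N}$ and let $\lambda$ be a nonzero real number. For all integers $l,n\ge0$, \[ (m\,a^{+}a+1)_{l+n,\lambda}=\sum_{j=0}^{l}W_{m,\lambda}(l,j)\,m^{j}(a^{+})^{j}\,(m\,a^{+}a+1+mj-l\lambda)_{n,\lambda}\,a^{j}. \]
   Context: For an operator or number $X$ and real $\lambda\neq0$, $(X)_{0,\lambda}=1$ and $(X)_{n,\lambda}=X(X-\lambda)\cdots(X-(n-1)\lambda)$ for $n\ge1$ (scalars mean multiples of the identity). For $m\in\mathbb{N}$, the degenerate Whitney numbers of the second kind $W_{m,\lambda}(n,k)$ are defined by $(mx+1)_{n,\lambda}=\sum_{k=0}^{n}W_{m,\lambda}(n,k)m^{k}(x)_k$ for $n\ge0$, where $(x)_k=x(x-1)\cdots(x-k+1)$. *)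

theory Defs
  imports Complex_Main
begin

fun deg_ff :: "'a::real_algebra_1 \<Rightarrow> real \<Rightarrow> nat \<Rightarrow> 'a" where
  "deg_ff X lam 0 = 1"
| "deg_ff X lam (Suc n) = deg_ff X lam n * (X - of_real (real n * lam))"

definition falling :: "real \<Rightarrow> nat \<Rightarrow> real" where
  "falling x k = (\<Prod>i<k. x - real i)"

text \<open>Degenerate Whitney numbers of the second kind, defined as the coefficients in
  (m x + 1)_{n,lambda} = sum_{k=0}^n W(n,k) m^k (x)_k  (for k > n we set W = 0).\<close>
definition deg_whitney2 :: "nat \<Rightarrow> real \<Rightarrow> nat \<Rightarrow> nat \<Rightarrow> real" where
  "deg_whitney2 m lam n k =
     (if k \<le> n then
        (THE c. \<exists>w :: nat \<Rightarrow> real.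
            (\<forall>x::real. deg_ff (real m * x + 1) lam n
                        = (\<Sum>j\<le>n. w j * real m ^ j * falling x j)) \<and> c = w k)
      else 0)"

end

theory Submission
  imports Defs
begin

lemma of_real_comm: "of_real r * (x::'a::real_algebra_1) = x * of_real r"
  by (simp add: of_real_def)

fun Wr :: "nat \<Rightarrow> real \<Rightarrow> nat \<Rightarrow> nat \<Rightarrow> real" where
  "Wr m lam 0 k = (if k = 0 then 1 else 0)"
| "Wr m lam (Suc n) k = (if k = 0 then 0 else Wr m lam n (k-1))
     + (real m * real k + 1 - real n * lam) * Wr m lam n k"

lemma Wr_zero: "n < k \<Longrightarrow> Wr m lam n k = 0"
  by (induction n arbitrary: k) auto

lemma Wr_step:
  fixes g :: "nat \<Rightarrow> 'a::real_algebra_1"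
  shows "(\<Sum>j\<le>Suc n. of_real (Wr m lam (Suc n) j) * g j)
       = (\<Sum>j\<le>n. of_real (Wr m lam n j) * (g (Suc j) + of_real (real m * real j + 1 - real n * lam) * g j))"
proof -
  have "(\<Sum>j\<le>Suc n. of_real (Wr m lam (Suc n) j) * g j)
     = (\<Sum>j\<le>Suc n. of_real (if j = 0 then 0 else Wr m lam n (j-1)) * g j)
     + (\<Sum>j\<le>Suc n. of_real ((real m * real j + 1 - real n * lam) * Wr m lam n j) * g j)"
    by (simp only: Wr.simps of_real_add distrib_right sum.distrib)
  also have "(\<Sum>j\<le>Suc n. of_real (if j = 0 then 0 else Wr m lam n (j-1)) * g j)
      = (\<Sum>j\<le>n. of_real (Wr m lam n j) * g (Suc j))"
    by (subst sum.atMost_Suc_shift) simp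
  also have "(\<Sum>j\<le>Suc n. of_real ((real m * real j + 1 - real n * lam) * Wr m lam n j) * g j)
      = (\<Sum>j\<le>n. of_real ((real m * real j + 1 - real n * lam) * Wr m lam n j) * g j)"
    by (simp add: Wr_zero)
  also have "\<dots> = (\<Sum>j\<le>n. of_real (Wr m lam n j) * (of_real (real m * real j + 1 - real n * lam) * g j))"
    by (intro sum.cong refl) (simp add: mult.assoc mult.commute)
  finally show ?thesis by (simp add: sum.distrib distrib_left)
qed

lemma falling_Suc: "falling x (Suc j) = falling x j * (x - real j)"
  by (simp add: falling_def)

lemma Wr_poly: "deg_ff (real m * x + 1) lam n = (\<Sum>j\<le>n. Wr m lam n j * real m ^ j * falling x j)"
proof (induction n)
  case 0
  then show ?case by (simp add: falling_def)
next
  case (Suc n)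
  have "(\<Sum>j\<le>Suc n. Wr m lam (Suc n) j * real m ^ j * falling x j)
    = (\<Sum>j\<le>Suc n. of_real (Wr m lam (Suc n) j) * (real m ^ j * falling x j))"
    by (simp add: mult.assoc)
  also have "\<dots> = (\<Sum>j\<le>n. Wr m lam n j * ((real m ^ Suc j * falling x (Suc j)) +
        (real m * real j + 1 - real n * lam) * (real m ^ j * falling x j)))"
    by (subst Wr_step) simp
  also have "\<dots> = (\<Sum>j\<le>n. Wr m lam n j * real m ^ j * falling x j) * (real m * x + 1 - real n * lam)"
    unfolding sum_distrib_right
    by (intro sum.cong refl) (simp add: falling_Suc algebra_simps)
  finally show ?case using Suc by simp
qed

lemma falling_nat_zero: "i < j \<Longrightarrow> falling (real i) j = 0"
  unfolding falling_def by (rule prod_zero) auto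

lemma falling_nat_nz: "falling (real i) i \<noteq> 0"
  unfolding falling_def by (auto simp: prod_zero_iff)

lemma uniq_coeffs:
  assumes m: "m \<ge> 1"
    and h: "\<forall>x::real. (\<Sum>j\<le>n. d j * real m ^ j * falling x j) = 0"
  shows "\<forall>i\<le>n. d i = 0"
proof (intro allI impI)
  fix i assume "i \<le> n"
  then show "d i = 0"
  proof (induction i rule: less_induct)
    case (less i)
    have "0 = (\<Sum>j\<le>n. d j * real m ^ j * falling (real i) j)" using h by simp
    also have "\<dots> = (\<Sum>j\<in>{i}. d j * real m ^ j * falling (real i) j)"
    proof (rule sum.mono_neutral_right)
      show "\<forall>j\<in>{..n} - {i}. d j * real m ^ j * falling (real i) j = 0"
      proof
        fix j assume j: "j \<in> {..n} - {i}"
        show "d j * real m ^ j * falling (real i) j = 0"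
        proof (cases "j < i")
          case True then show ?thesis using less j by auto
        next
          case False then show ?thesis using j by (simp add: falling_nat_zero)
        qed
      qed
    qed (use less in auto)
    finally show ?case using m falling_nat_nz[of i] by simp
  qed
qed

lemma whitney_eq:
  assumes m: "m \<ge> 1" and k: "k \<le> n"
  shows "deg_whitney2 m lam n k = Wr m lam n k"
proof -
  have "(THE c. \<exists>w :: nat \<Rightarrow> real.
            (\<forall>x::real. deg_ff (real m * x + 1) lam n
                        = (\<Sum>j\<le>n. w j * real m ^ j * falling x j)) \<and> c = w k) = Wr m lam n k"
  proof (rule the_equality)
    show "\<exists>w :: nat \<Rightarrow> real.
            (\<forall>x::real. deg_ff (real m * x + 1) lam n
                        = (\<Sum>j\<le>n. w j * real m ^ j * falling x j)) \<and> Wr m lam n k = w k"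
      using Wr_poly by blast
  next
    fix c assume "\<exists>w :: nat \<Rightarrow> real.
            (\<forall>x::real. deg_ff (real m * x + 1) lam n
                        = (\<Sum>j\<le>n. w j * real m ^ j * falling x j)) \<and> c = w k"
    then obtain w where w: "\<forall>x::real. deg_ff (real m * x + 1) lam n
                        = (\<Sum>j\<le>n. w j * real m ^ j * falling x j)" and c: "c = w k" by blast
    have "\<forall>x::real. (\<Sum>j\<le>n. (w j - Wr m lam n j) * real m ^ j * falling x j) = 0"
      using w Wr_poly by (simp add: algebra_simps sum_subtractf)
    from uniq_coeffs[OF m this] k c show "c = Wr m lam n k" by simp
  qed
  then show ?thesis using k by (simp add: deg_whitney2_def)
qed


lemma deg_ff_shift: "deg_ff (Y::'a::real_algebra_1) lam (Suc n) = Y * deg_ff (Y - of_real lam) lam n"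
proof (induction n)
  case 0 then show ?case by simp
next
  case (Suc n)
  have "deg_ff Y lam (Suc (Suc n)) = Y * deg_ff (Y - of_real lam) lam n * (Y - of_real (real (Suc n) * lam))"
    using Suc by simp
  also have "Y - of_real (real (Suc n) * lam) = (Y - of_real lam) - of_real (real n * lam)"
    by (simp add: algebra_simps)
  finally show ?case by (simp add: mult.assoc)
qed

lemma a_shift:
  fixes a y :: "'a::real_algebra_1"
  assumes "a * y = (y + of_nat m) * a"
  shows "a * deg_ff y lam n = deg_ff (y + of_nat m) lam n * a"
proof (induction n)
  case 0 then show ?case by simp
next
  case (Suc n)
  have c: "a * (y - of_real c) = (y + of_nat m - of_real c) * a" for c
    using assms by (simp add: algebra_simps of_real_comm)
  have "a * deg_ff y lam (Suc n) = (a * deg_ff y lam n) * (y - of_real (real n * lam))"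
    by (simp add: mult.assoc)
  also have "\<dots> = deg_ff (y + of_nat m) lam n * (a * (y - of_real (real n * lam)))"
    using Suc by (simp add: mult.assoc)
  also have "\<dots> = deg_ff (y + of_nat m) lam (Suc n) * a"
    by (simp only: c deg_ff.simps mult.assoc)
  finally show ?case .
qed

lemma comm_B:
  fixes a ad :: "'a::real_algebra_1"
  assumes boson: "a * ad - ad * a = 1"
  shows "a * (of_nat m * ad * a + of_real r) = (of_nat m * ad * a + of_real r + of_nat m) * a"
proof -
  have e: "a * ad = 1 + ad * a" using boson by (simp add: algebra_simps)
  have "a * (of_nat m * ad * a) = of_nat m * (a * ad) * a"
    by (simp add: mult.assoc mult_of_nat_commute)
  also have "\<dots> = of_nat m * a + of_nat m * ad * a * a" by (simp add: e algebra_simps)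
  finally show ?thesis by (simp add: algebra_simps of_real_comm mult_of_nat_commute)
qed

lemma term_step:
  fixes a ad :: "'a::real_algebra_1"
  assumes boson: "a * ad - ad * a = 1"
  shows "of_real (real m ^ j) * ad^j * deg_ff (of_nat m * ad * a + of_real r) lam (Suc n) * a^j
   = of_real (real m ^ Suc j) * ad^Suc j * deg_ff (of_nat m * ad * a + of_real (r - lam + real m)) lam n * a^Suc j
   + of_real r * (of_real (real m ^ j) * ad^j * deg_ff (of_nat m * ad * a + of_real (r - lam)) lam n * a^j)"
proof -
  define B where "B = of_nat m * ad * a"
  define E where "E = deg_ff (B + of_real (r - lam)) lam n"
  define E' where "E' = deg_ff (B + of_real (r - lam + real m)) lam n"
  have aE: "a * E = E' * a"
    unfolding E_def E'_def B_def
    using a_shift[OF comm_B[OF boson, of m "r - lam"], of lam n] by (simp add: add.assoc)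
  have adB: "ad^j * B = of_nat m * ad^Suc j * a"
  proof -
    have "ad^j * B = of_nat m * (ad^j * ad) * a"
      unfolding B_def by (simp add: mult.assoc mult_of_nat_commute)
    then show ?thesis by (simp only: power_Suc2)
  qed
  have "deg_ff (B + of_real r) lam (Suc n) = (B + of_real r) * E"
  proof -
    have "B + of_real (r - lam) = B + of_real r - of_real lam" by (simp add: algebra_simps)
    then show ?thesis unfolding E_def by (simp only: deg_ff_shift)
  qed
  hence "of_real (real m ^ j) * ad^j * deg_ff (B + of_real r) lam (Suc n) * a^j
     = of_real (real m ^ j) * (ad^j * B) * E * a^j + of_real r * (of_real (real m ^ j) * ad^j * E * a^j)"
    by (simp add: algebra_simps of_real_comm)
  also have "of_real (real m ^ j) * (ad^j * B) * E * a^j = of_real (real m ^ j) * of_nat m * ad^Suc j * (a * E) * a^j"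
    by (simp add: adB mult.assoc)
  also have "\<dots> = of_real (real m ^ Suc j) * ad^Suc j * E' * a^Suc j"
    by (simp add: aE mult.assoc) (metis mult.assoc power_Suc power_Suc2)
  finally show ?thesis unfolding B_def E_def E'_def .
qed

lemma main_aux:
  fixes a ad :: "'a::real_algebra_1"
  assumes boson: "a * ad - ad * a = 1"
  shows "\<forall>n. deg_ff (of_nat m * ad * a + 1) lam (l + n) = (\<Sum>j\<le>l. of_real (Wr m lam l j) *
     (of_real (real m ^ j) * ad^j * deg_ff (of_nat m * ad * a + of_real (real m * real j + 1 - real l * lam)) lam n * a^j))"
proof (induction l)
  case 0
  then show ?case by simp
next
  case (Suc l)
  show ?case
  proof
    fix n
    define g where "g j = of_real (real m ^ j) * ad^j * deg_ff (of_nat m * ad * a + of_real (real m * real j + 1 - real (Suc l) * lam)) lam n * a^j" for j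
    have "deg_ff (of_nat m * ad * a + 1) lam (Suc l + n) = deg_ff (of_nat m * ad * a + 1) lam (l + Suc n)"
      by simp
    also have "\<dots> = (\<Sum>j\<le>l. of_real (Wr m lam l j) *
     (of_real (real m ^ j) * ad^j * deg_ff (of_nat m * ad * a + of_real (real m * real j + 1 - real l * lam)) lam (Suc n) * a^j))"
      using Suc by blast
    also have "\<dots> = (\<Sum>j\<le>l. of_real (Wr m lam l j) * (g (Suc j) + of_real (real m * real j + 1 - real l * lam) * g j))"
    proof (intro sum.cong refl arg_cong2[where f="(*)"])
      fix j
      have e1: "real m * real j + 1 - real (Suc l) * lam + real m = real m * real (Suc j) + 1 - real (Suc l) * lam"
        by (simp add: algebra_simps)
      have e2: "real m * real j + 1 - real l * lam - lam = real m * real j + 1 - real (Suc l) * lam"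
        by (simp add: algebra_simps)
      show "of_real (real m ^ j) * ad^j * deg_ff (of_nat m * ad * a + of_real (real m * real j + 1 - real l * lam)) lam (Suc n) * a^j
        = g (Suc j) + of_real (real m * real j + 1 - real l * lam) * g j"
        unfolding term_step[OF boson] g_def e1 e2 ..
    qed
    also have "\<dots> = (\<Sum>j\<le>Suc l. of_real (Wr m lam (Suc l) j) * g j)"
      by (rule Wr_step[symmetric])
    finally show "deg_ff (of_nat m * ad * a + 1) lam (Suc l + n) = (\<Sum>j\<le>Suc l. of_real (Wr m lam (Suc l) j) *
     (of_real (real m ^ j) * ad^j * deg_ff (of_nat m * ad * a + of_real (real m * real j + 1 - real (Suc l) * lam)) lam n * a^j))"
      unfolding g_def .
  qed
qed

theorem mainTheorem6:
  fixes a ad :: "'a::real_algebra_1" and m :: nat and lam :: real and l n :: nat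
  assumes boson: "a * ad - ad * a = 1"
    and m_pos: "m \<ge> 1"
    and lam_nz: "lam \<noteq> 0"
  shows "deg_ff (of_nat m * ad * a + 1) lam (l + n)
       = (\<Sum>j\<le>l. of_real (deg_whitney2 m lam l j * real m ^ j) * ad ^ j
            * deg_ff (of_nat m * ad * a + 1 + of_nat (m * j) - of_real (real l * lam)) lam n
            * a ^ j)"
proof -
  have "deg_ff (of_nat m * ad * a + 1) lam (l + n) = (\<Sum>j\<le>l. of_real (Wr m lam l j) *
     (of_real (real m ^ j) * ad^j * deg_ff (of_nat m * ad * a + of_real (real m * real j + 1 - real l * lam)) lam n * a^j))"
    using main_aux[OF boson] by blast
  also have "\<dots> = (\<Sum>j\<le>l. of_real (deg_whitney2 m lam l j * real m ^ j) * ad ^ j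
            * deg_ff (of_nat m * ad * a + 1 + of_nat (m * j) - of_real (real l * lam)) lam n
            * a ^ j)"
  proof (intro sum.cong refl)
    fix j assume j: "j \<in> {..l}"
    have e: "of_nat m * ad * a + of_real (real m * real j + 1 - real l * lam)
       = of_nat m * ad * a + 1 + of_nat (m * j) - (of_real (real l * lam) :: 'a)"
      by (simp add: algebra_simps)
    show "of_real (Wr m lam l j) *
     (of_real (real m ^ j) * ad^j * deg_ff (of_nat m * ad * a + of_real (real m * real j + 1 - real l * lam)) lam n * a^j)
      = of_real (deg_whitney2 m lam l j * real m ^ j) * ad ^ j
            * deg_ff (of_nat m * ad * a + 1 + of_nat (m * j) - of_real (real l * lam)) lam n
            * a ^ j"
      unfolding e[symmetric] using j by (simp only: whitney_eq[OF m_pos] atMost_iff of_real_mult mult.assoc)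
  qed
  finally show ?thesis .
qed

end
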